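(* For every $m\geqslant4$, $$\left|\mathcal{D}_m-\frac12\cdot\frac{1}{2\uparrow\uparrow m}\right|\leqslant\frac{3}{3^{2\uparrow\uparrow(m-1)}}.$$
   Context: $H(n)$ is the height of the factorization tree of $n\geqslant1$: $H(1)=0$ and, for $n=p_1^{\alpha_1}\cdots p_k^{\alpha_k}>1$ with distinct primes $p_i$, $H(n)=1+\max_i H(\alpha_i)$. Tetration: $a\uparrow\uparrow0=1$, $a\uparrow\uparrow b=a^{a\uparrow\uparrow(b-1)}$. $\mathcal{D}_m$ denotes the natural density of the set $\{n\geqslant 1: H(n)=m\}$, i.e. $\mathcal{D}_m=\lim_{x\to\infty}\frac1x\#\{n\leqslant x:H(n)=m\}$ (which exists). *)

theory Defs
  imports "HOL-Analysis.Analysis" "HOL-Computational_Algebra.Primes"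
begin

lemma multiplicity_less_self:
  assumes "prime (p::nat)" "n > 1"
  shows "multiplicity p n < n"
proof -
  have "p ^ multiplicity p n dvd n" by (rule multiplicity_dvd)
  hence "p ^ multiplicity p n \<le> n" using assms(2) by (intro dvd_imp_le) auto
  moreover have "multiplicity p n < 2 ^ multiplicity p n" by (rule less_exp)
  moreover have "(2::nat) ^ multiplicity p n \<le> p ^ multiplicity p n"
    using prime_ge_2_nat[OF assms(1)] by (rule power_mono) simp
  ultimately show ?thesis by linarith
qed

text \<open>Height of the factorization tree: H(1) = 0 and
  H(n) = 1 + max over primes p | n of H(multiplicity p n). (H 0 = 0 is a dummy value.)\<close>
function H :: "nat \<Rightarrow> nat" where
  "H n = (if n \<le> 1 then 0
          else 1 + Max ((\<lambda>p. H (multiplicity p n)) ` prime_factors n))"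
  by auto
termination
  by (relation "Wellfounded.measure id") (auto intro: multiplicity_less_self simp: in_prime_factors_iff)

declare H.simps[simp del]

fun tet :: "nat \<Rightarrow> nat \<Rightarrow> nat" where
  "tet a 0 = 1"
| "tet a (Suc b) = a ^ tet a b"

text \<open>Natural density (the limit of the counting ratio, which exists for the sets considered).\<close>
definition natural_density :: "nat set \<Rightarrow> real" where
  "natural_density A = lim (\<lambda>x. real (card {n \<in> {1..x}. n \<in> A}) / real x)"

definition D :: "nat \<Rightarrow> real" where
  "D m = natural_density {n. n \<ge> 1 \<and> H n = m}"

end

theory Submission
  imports Defs
begin

lemma H0[simp]: "H 0 = 0" by (subst H.simps) simp
lemma H1[simp]: "H (Suc 0) = 0" by (subst H.simps) simp
lemma H1'[simp]: "H 1 = 0" by simp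

lemma H_gt1: "n > 1 \<Longrightarrow> H n = 1 + Max ((\<lambda>p. H (multiplicity p n)) ` prime_factors n)"
  by (subst H.simps) simp

lemma H_pos: "1 \<le> H n \<Longrightarrow> n > 1"
  by (cases "n \<le> 1") (auto simp: H.simps[of n])

lemma H_ge_Suc_iff:
  assumes "n \<ge> 1" "k \<ge> 1"
  shows "(Suc k \<le> H n) \<longleftrightarrow> (\<exists>p. prime p \<and> k \<le> H (multiplicity p n))"
proof (cases "n = 1")
  case True
  then show ?thesis using assms(2) by simp
next
  case False
  with assms have n1: "n > 1" by simp
  have fin: "finite ((\<lambda>p. H (multiplicity p n)) ` prime_factors n)" by simp
  obtain q where q: "prime q" "q dvd n" using prime_factor_nat[of n] n1 by auto
  then have "q \<in> prime_factors n" using n1 by (simp add: in_prime_factors_iff)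
  then have ne: "prime_factors n \<noteq> {}" by auto
  have "(Suc k \<le> H n) \<longleftrightarrow> (\<exists>p\<in>prime_factors n. k \<le> H (multiplicity p n))"
    using fin ne H_gt1[OF n1] by (simp add: Max_ge_iff)
  also have "\<dots> \<longleftrightarrow> (\<exists>p. prime p \<and> k \<le> H (multiplicity p n))"
  proof
    assume "\<exists>p\<in>prime_factors n. k \<le> H (multiplicity p n)"
    then show "\<exists>p. prime p \<and> k \<le> H (multiplicity p n)"
      by (meson in_prime_factors_imp_prime)
  next
    assume "\<exists>p. prime p \<and> k \<le> H (multiplicity p n)"
    then obtain p where p: "prime p" "k \<le> H (multiplicity p n)" by blast
    have "multiplicity p n \<noteq> 0" using p assms(2) by (metis H0 le_zero_eq not_one_le_zero)
    then have pd: "p dvd n" by (metis not_dvd_imp_multiplicity_0)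
    have "p \<in> prime_factors n" using p(1) pd n1 by (simp add: in_prime_factors_iff)
    then show "\<exists>p\<in>prime_factors n. k \<le> H (multiplicity p n)" using p(2) by blast
  qed
  finally show ?thesis .
qed

lemma pf2_aux: "prime p \<Longrightarrow> p dvd 2 ^ e \<Longrightarrow> p = (2::nat)"
  using prime_dvd_power[of p 2 e] primes_dvd_imp_eq[of p 2] by auto

lemma pf2: "e \<ge> 1 \<Longrightarrow> prime_factors ((2::nat) ^ e) = {2}"
proof -
  assume e: "e \<ge> 1"
  have "p \<in> prime_factors ((2::nat) ^ e) \<Longrightarrow> p = 2" for p
    using pf2_aux[of p e] in_prime_factors_imp_prime[of p "(2::nat)^e"] in_prime_factors_imp_dvd[of p "(2::nat)^e"] by simp
  moreover have "2 \<in> prime_factors ((2::nat) ^ e)" using e by (simp add: in_prime_factors_iff)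
  ultimately show ?thesis by auto
qed

lemma H_pow2_aux: "(2::nat) ^ e > 1 \<Longrightarrow> prime_factors ((2::nat) ^ e) = {2} \<Longrightarrow> H (2 ^ e) = 1 + H e"
  using H_gt1[of "2^e"] by (simp add: multiplicity_prime_power)

lemma H_pow2: "e \<ge> 1 \<Longrightarrow> H (2 ^ e) = 1 + H e"
proof -
  assume e: "e \<ge> 1"
  have gt: "(2::nat) ^ e > 1" using one_less_power[of "2::nat" e] e by simp
  show ?thesis using H_pow2_aux[OF gt pf2[OF e]] .
qed

lemma tet_ge1: "tet 2 k \<ge> 1"
  by (induction k) auto

lemma H_tet: "H (tet 2 k) = k"
proof (induction k)
  case 0 then show ?case by simp
next
  case (Suc k) then show ?case using H_pow2[OF tet_ge1[of k]] by simp
qed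

lemma tet_min: "a \<ge> 1 \<Longrightarrow> k \<le> H a \<Longrightarrow> tet 2 k \<le> a"
proof (induction k arbitrary: a)
  case 0
  then show ?case by simp
next
  case (Suc k)
  show ?case
  proof (cases "k = 0")
    case True
    then show ?thesis using H_pos[of a] Suc.prems by simp
  next
    case False
    then obtain p where p: "prime p" "k \<le> H (multiplicity p a)" using H_ge_Suc_iff[of a k] Suc.prems by auto
    have m0: "multiplicity p a \<ge> 1" using p False by (metis H0 le_zero_eq less_one not_less)
    have "tet 2 k \<le> multiplicity p a" using Suc.IH[OF m0 p(2)] .
    then have "(2::nat) ^ tet 2 k \<le> 2 ^ multiplicity p a" by (intro power_increasing) auto
    also have "\<dots> \<le> p ^ multiplicity p a" using prime_ge_2_nat[OF p(1)] by (intro power_mono) auto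
    finally have "(2::nat) ^ tet 2 k \<le> p ^ multiplicity p a" .
    also have "\<dots> \<le> a" using multiplicity_dvd[of p a] Suc.prems(1) by (intro dvd_imp_le) auto
    finally show ?thesis by simp
  qed
qed

definition cnt :: "(nat \<Rightarrow> bool) \<Rightarrow> nat \<Rightarrow> nat" where
  "cnt P x = card {n \<in> {1..x}. P n}"

lemma cnt_0[simp]: "cnt P 0 = 0" by (simp add: cnt_def)

lemma cnt_Suc: "cnt P (Suc x) = cnt P x + (if P (Suc x) then 1 else 0)"
proof -
  have "{n \<in> {1..Suc x}. P n} = {n \<in> {1..x}. P n} \<union> (if P (Suc x) then {Suc x} else {})"
    by (auto simp: le_Suc_eq)
  then show ?thesis by (simp add: cnt_def)
qed

lemma cnt_le: "cnt P x \<le> x"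
proof -
  have "cnt P x \<le> card {1..x}" unfolding cnt_def by (rule card_mono) auto
  then show ?thesis by simp
qed

lemma cnt_mono: "(\<And>n. 1 \<le> n \<Longrightarrow> n \<le> x \<Longrightarrow> P n \<Longrightarrow> Q n) \<Longrightarrow> cnt P x \<le> cnt Q x"
  unfolding cnt_def by (rule card_mono) auto

lemma cnt_diff: "(\<And>n. Q n \<Longrightarrow> P n) \<Longrightarrow>
   real (cnt (\<lambda>n. P n \<and> \<not> Q n) x) = real (cnt P x) - real (cnt Q x)"
proof -
  assume QP: "\<And>n. Q n \<Longrightarrow> P n"
  have eq: "{n \<in> {1..x}. P n \<and> \<not> Q n} = {n \<in> {1..x}. P n} - {n \<in> {1..x}. Q n}" by auto
  have sub: "{n \<in> {1..x}. Q n} \<subseteq> {n \<in> {1..x}. P n}" using QP by auto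
  have "card ({n \<in> {1..x}. P n} - {n \<in> {1..x}. Q n}) = card {n \<in> {1..x}. P n} - card {n \<in> {1..x}. Q n}"
    by (rule card_Diff_subset) (use sub in auto)
  moreover have "card {n \<in> {1..x}. Q n} \<le> card {n \<in> {1..x}. P n}" by (rule card_mono) (use sub in auto)
  ultimately show ?thesis unfolding cnt_def eq by simp
qed

lemma cnt_disj: "cnt (\<lambda>n. P n \<or> Q n) x \<le> cnt P x + cnt Q x"
proof -
  have "{n \<in> {1..x}. P n \<or> Q n} = {n \<in> {1..x}. P n} \<union> {n \<in> {1..x}. Q n}" by auto
  then show ?thesis unfolding cnt_def by (metis card_Un_le)
qed

lemma cnt_union: "finite J \<Longrightarrow> cnt (\<lambda>n. \<exists>j\<in>J. P j n) x \<le> (\<Sum>j\<in>J. cnt (P j) x)"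
proof -
  assume J: "finite J"
  have "{n \<in> {1..x}. \<exists>j\<in>J. P j n} = (\<Union>j\<in>J. {n \<in> {1..x}. P j n})" by auto
  then show ?thesis unfolding cnt_def using card_UN_le[OF J, of "\<lambda>j. {n \<in> {1..x}. P j n}"] by simp
qed

lemma cnt_dvd: "d \<ge> 1 \<Longrightarrow> cnt (\<lambda>n. d dvd n) x = x div d"
proof -
  assume d: "d \<ge> 1"
  have "{n \<in> {1..x}. d dvd n} = (\<lambda>k. d * k) ` {1..x div d}"
  proof (rule set_eqI)
    fix n
    show "n \<in> {n \<in> {1..x}. d dvd n} \<longleftrightarrow> n \<in> (\<lambda>k. d * k) ` {1..x div d}"
    proof
      assume "n \<in> {n \<in> {1..x}. d dvd n}"
      then obtain k where k: "n = d * k" "1 \<le> n" "n \<le> x" by (auto elim!: dvdE)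
      then have "1 \<le> k" by (cases k) auto
      moreover have "k \<le> x div d" using k d by (metis div_le_mono mult.commute nonzero_mult_div_cancel_left not_one_le_zero)
      ultimately show "n \<in> (\<lambda>k. d * k) ` {1..x div d}" using k by auto
    next
      assume "n \<in> (\<lambda>k. d * k) ` {1..x div d}"
      then obtain k where k: "n = d * k" "1 \<le> k" "k \<le> x div d" by (elim imageE) auto
      have "d * k \<le> d * (x div d)" using k by simp
      also have "\<dots> \<le> x" by simp
      finally show "n \<in> {n \<in> {1..x}. d dvd n}" using k d by auto
    qed
  qed
  moreover have "inj_on (\<lambda>k. d * k) {1..x div d}" using d by (auto simp: inj_on_def)
  ultimately show ?thesis unfolding cnt_def by (simp add: card_image)
qed

lemma real_div_le: "d \<ge> 1 \<Longrightarrow> real (x div d) \<le> real x / real d"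
  by (rule of_nat_div_le_of_nat)

lemma real_div_ge: "d \<ge> 1 \<Longrightarrow> real (x div d) \<ge> real x / real d - 1"
proof -
  assume d: "d \<ge> 1"
  have "real x / real d = real (x div d) + real (x mod d) / real d" by (rule of_nat_of_nat_div_aux)
  moreover have "real (x mod d) / real d \<le> 1" using d by simp
  ultimately show ?thesis by simp
qed

lemma cnt_dvd_le: "d \<ge> 1 \<Longrightarrow> real (cnt (\<lambda>n. d dvd n) x) \<le> real x / real d"
  using cnt_dvd real_div_le by simp

lemma inv_sq_sum: "j0 \<ge> 1 \<Longrightarrow> (\<Sum>j\<in>{Suc j0..N}. 1 / (real j)^2) \<le> 1 / real j0"
proof -
  assume j0: "j0 \<ge> 1"
  have main: "(\<Sum>j\<in>{Suc j0..N}. 1 / (real j)^2) \<le> 1 / real j0 - 1 / real N" if "j0 \<le> N" for N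
    using that
  proof (induction N rule: dec_induct)
    case base then show ?case by simp
  next
    case (step n)
    have n1: "real n \<ge> 1" using step j0 by simp
    have eq: "{Suc j0..Suc n} = insert (Suc n) {Suc j0..n}" using step by auto
    have "1 / real n - 1 / real (Suc n) = 1 / (real n * real (Suc n))"
      using n1 by (simp add: field_simps)
    moreover have "1 / (real (Suc n))^2 \<le> 1 / (real n * real (Suc n))"
      using n1 by (intro divide_left_mono) (auto simp: power2_eq_square)
    ultimately have "1 / (real (Suc n))^2 \<le> 1 / real n - 1 / real (Suc n)" by simp
    then show ?case using step.IH by (simp add: eq)
  qed
  show ?thesis
  proof (cases "j0 \<le> N")
    case True
    have "0 \<le> 1 / real N" by simp
    then show ?thesis using main[OF True] by linarith
  next
    case False then show ?thesis by simp
  qed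
qed

lemma tail_bound:
  assumes U: "U \<ge> 2" and j0: "j0 \<ge> 1"
  shows "real (cnt (\<lambda>n. \<exists>j\<ge>j0. j ^ U dvd n) x)
     \<le> real x / real j0 ^ U + real x / (real j0 * real (Suc j0) ^ (U - 2))"
proof -
  have "cnt (\<lambda>n. \<exists>j\<ge>j0. j ^ U dvd n) x \<le> cnt (\<lambda>n. \<exists>j\<in>{j0..x}. j ^ U dvd n) x"
  proof (rule cnt_mono)
    fix n assume n: "1 \<le> n" "n \<le> x" "\<exists>j\<ge>j0. j ^ U dvd n"
    then obtain j where j: "j \<ge> j0" "j ^ U dvd n" by auto
    have "j \<le> j ^ U" using j j0 U by (metis One_nat_def le_trans less_exp nat_le_linear not_less power_increasing power_one_right Suc_1 Suc_leD)
    also have "\<dots> \<le> n" using j n by (intro dvd_imp_le) auto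
    finally show "\<exists>j\<in>{j0..x}. j ^ U dvd n" using j n by auto
  qed
  also have "\<dots> \<le> (\<Sum>j\<in>{j0..x}. cnt (\<lambda>n. j ^ U dvd n) x)" by (rule cnt_union) simp
  finally have "real (cnt (\<lambda>n. \<exists>j\<ge>j0. j ^ U dvd n) x) \<le> (\<Sum>j\<in>{j0..x}. real (cnt (\<lambda>n. j ^ U dvd n) x))"
    by (metis of_nat_le_iff of_nat_sum)
  also have "\<dots> \<le> (\<Sum>j\<in>{j0..x}. real x / real j ^ U)"
  proof (rule sum_mono)
    fix j assume "j \<in> {j0..x}"
    then have "j ^ U \<ge> 1" using j0 by simp
    then show "real (cnt (\<lambda>n. j ^ U dvd n) x) \<le> real x / real j ^ U" using cnt_dvd_le by (metis of_nat_power)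
  qed
  also have "\<dots> \<le> (\<Sum>j\<in>insert j0 {Suc j0..x}. real x / real j ^ U)"
    by (rule sum_mono2) auto
  also have "\<dots> = real x / real j0 ^ U + (\<Sum>j\<in>{Suc j0..x}. real x / real j ^ U)"
    by (subst sum.insert) auto
  also have "(\<Sum>j\<in>{Suc j0..x}. real x / real j ^ U) \<le> (\<Sum>j\<in>{Suc j0..x}. (real x / real (Suc j0) ^ (U - 2)) * (1 / (real j)^2))"
  proof (rule sum_mono)
    fix j assume jj: "j \<in> {Suc j0..x}"
    have jpos: "real j > 0" using jj by simp
    have "real (Suc j0) ^ (U - 2) \<le> real j ^ (U - 2)" using jj by (intro power_mono) auto
    then have "real (Suc j0) ^ (U - 2) * (real j)^2 \<le> real j ^ (U - 2) * (real j)^2"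
      by (intro mult_right_mono) auto
    also have "\<dots> = real j ^ U" using U by (metis le_add_diff_inverse2 power_add)
    finally have le: "real (Suc j0) ^ (U - 2) * (real j)^2 \<le> real j ^ U" .
    have pos: "real (Suc j0) ^ (U - 2) * (real j)^2 > 0" using jpos by simp
    have "real x / real j ^ U \<le> real x / (real (Suc j0) ^ (U - 2) * (real j)^2)"
      using pos jpos by (intro divide_left_mono[OF le]) (auto intro!: mult_pos_pos)
    then show "real x / real j ^ U \<le> (real x / real (Suc j0) ^ (U - 2)) * (1 / (real j)^2)" by simp
  qed
  also have "\<dots> = (real x / real (Suc j0) ^ (U - 2)) * (\<Sum>j\<in>{Suc j0..x}. 1 / (real j)^2)"
    by (simp add: sum_distrib_left)
  also have "\<dots> \<le> (real x / real (Suc j0) ^ (U - 2)) * (1 / real j0)"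
    by (rule mult_left_mono[OF inv_sq_sum[OF j0]]) simp
  also have "\<dots> = real x / (real j0 * real (Suc j0) ^ (U - 2))" by simp
  finally show ?thesis by simp
qed

lemma cnt_period:
  assumes M: "M \<ge> 1" and per: "\<And>n. n \<ge> 1 \<Longrightarrow> A (n + M) = A n"
  shows "cnt A (x + M) = cnt A x + cnt A M"
proof (induction x)
  case 0 then show ?case by simp
next
  case (Suc x)
  have "cnt A (Suc x + M) = cnt A (Suc (x + M))" by simp
  also have "\<dots> = cnt A (x + M) + (if A (Suc (x + M)) then 1 else 0)" by (rule cnt_Suc)
  also have "A (Suc (x + M)) = A (Suc x)" using per[of "Suc x"] by simp
  finally show ?case using Suc.IH by (simp add: cnt_Suc)
qed

lemma cnt_period2:
  assumes M: "M \<ge> 1" and per: "\<And>n. n \<ge> 1 \<Longrightarrow> A (n + M) = A n"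
  shows "cnt A (q * M + r) = q * cnt A M + cnt A r"
proof (induction q)
  case 0 then show ?case by simp
next
  case (Suc q)
  have "cnt A (Suc q * M + r) = cnt A ((q * M + r) + M)" by (simp add: algebra_simps)
  also have "\<dots> = cnt A (q * M + r) + cnt A M" by (rule cnt_period[where A=A, OF M per])
  finally show ?case using Suc.IH by simp
qed

lemma period_approx:
  assumes M: "M \<ge> 1" and per: "\<And>n. n \<ge> 1 \<Longrightarrow> A (n + M) = A n"
  shows "\<bar>real (cnt A x) - real x * real (cnt A M) / real M\<bar> \<le> real M"
proof -
  define q where "q = x div M"
  define r where "r = x mod M"
  define c where "c = cnt A M"
  have x: "x = q * M + r" unfolding q_def r_def by simp
  have rM: "r < M" unfolding r_def using M by simp
  have cM: "c \<le> M" unfolding c_def by (rule cnt_le)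
  have e1: "real (cnt A x) = real q * real c + real (cnt A r)"
    unfolding c_def using cnt_period2[where A=A, OF M per, of q r] x by simp
  have e2: "real x * real c / real M = real q * real c + real r * real c / real M"
    using M x by (simp add: field_simps)
  have a1: "real (cnt A r) \<le> real r" using cnt_le by simp
  have a2: "0 \<le> real r * real c / real M" by simp
  have a3: "real r * real c / real M \<le> real r"
  proof -
    have "real r * real c \<le> real r * real M" using cM by (intro mult_left_mono) auto
    then show ?thesis using M by (simp add: divide_le_eq)
  qed
  have rM': "real r < real M" using rM by simp
  have d: "real (cnt A x) - real x * real c / real M = real (cnt A r) - real r * real c / real M"
    using e1 e2 by linarith
  have z: "real (cnt A r) \<ge> 0" by simp
  show ?thesis unfolding c_def[symmetric] d abs_le_iff using a1 a2 a3 rM' z by linarith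
qed

lemma mult_shift:
  fixes p n M K :: nat
  assumes p: "prime p" and n: "n \<ge> 1" and pM: "p ^ K dvd M"
  shows "multiplicity p n < K \<Longrightarrow> multiplicity p (n + M) = multiplicity p n"
    and "multiplicity p n \<ge> K \<Longrightarrow> multiplicity p (n + M) \<ge> K"
proof -
  have nu: "\<not> is_unit p" using prime_gt_1_nat[OF p] by simp
  have n0: "n \<noteq> 0" using n by simp
  have nM0: "n + M \<noteq> 0" using n by simp
  {
    assume lt: "multiplicity p n < K"
    define v where "v = multiplicity p n"
    have d1: "p ^ v dvd n" unfolding v_def by (rule multiplicity_dvd)
    have d2: "p ^ v dvd M" using lt pM unfolding v_def by (meson dvd_trans le_imp_power_dvd less_imp_le)
    have d3: "\<not> p ^ Suc v dvd n" using power_dvd_iff_le_multiplicity[OF n0 nu, of "Suc v"] unfolding v_def by simp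
    have d4: "p ^ Suc v dvd M" using lt pM unfolding v_def by (meson dvd_trans le_imp_power_dvd Suc_leI)
    have d5: "\<not> p ^ Suc v dvd n + M" using d3 d4 by (simp add: dvd_add_left_iff)
    show "multiplicity p (n + M) = multiplicity p n"
      unfolding v_def[symmetric] by (rule multiplicity_eqI) (use d1 d2 d5 in auto)
  }
  {
    assume ge: "multiplicity p n \<ge> K"
    have "p ^ K dvd n" using ge by (rule multiplicity_dvd')
    then have "p ^ K dvd n + M" using pM by simp
    then show "multiplicity p (n + M) \<ge> K" using power_dvd_iff_le_multiplicity[OF nM0 nu] by simp
  }
qed

definition PP :: "(nat \<Rightarrow> bool) \<Rightarrow> nat \<Rightarrow> bool" where
  "PP Q n = (\<exists>p. prime p \<and> Q (multiplicity p n))"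

definition AA :: "(nat \<Rightarrow> bool) \<Rightarrow> nat \<Rightarrow> nat \<Rightarrow> bool" where
  "AA Q K n = (\<exists>p. prime p \<and> p \<le> K \<and> Q (multiplicity p n) \<and> multiplicity p n < K)"

lemma AA_periodic:
  assumes n: "n \<ge> 1"
  shows "AA Q K (n + fact K ^ K) = AA Q K n"
proof -
  have "(Q (multiplicity p (n + fact K ^ K)) \<and> multiplicity p (n + fact K ^ K) < K) =
        (Q (multiplicity p n) \<and> multiplicity p n < K)" if p: "prime p" "p \<le> K" for p
  proof -
    have "p dvd fact K" using p prime_ge_1_nat[OF p(1)] by (intro dvd_fact) auto
    then have pM: "p ^ K dvd fact K ^ K" by (rule dvd_power_same)
    show ?thesis
    proof (cases "multiplicity p n < K")
      case True
      then show ?thesis using mult_shift(1)[OF p(1) n pM] by simp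
    next
      case False
      then show ?thesis using mult_shift(2)[OF p(1) n pM] by simp
    qed
  qed
  then show ?thesis unfolding AA_def by blast
qed

lemma three_pow: "K \<ge> 2 \<Longrightarrow> K \<le> 2 * 3 ^ (K - 2)"
proof (induction K rule: dec_induct)
  case base then show ?case by simp
next
  case (step n)
  then have "Suc n - 2 = Suc (n - 2)" by simp
  then have "(3::nat) ^ (Suc n - 2) = 3 * 3 ^ (n - 2)" by simp
  then show ?case using step by simp
qed

lemma approx_bound:
  assumes Q0: "\<not> Q 0" and Q1: "\<not> Q 1" and K: "K \<ge> 2"
  shows "real (cnt (PP Q) x) - real (cnt (AA Q K) x) \<le> 4 * real x / real K"
proof -
  have sub: "AA Q K n \<Longrightarrow> PP Q n" for n unfolding AA_def PP_def by blast
  have "real (cnt (PP Q) x) - real (cnt (AA Q K) x) = real (cnt (\<lambda>n. PP Q n \<and> \<not> AA Q K n) x)"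
    using cnt_diff[of "AA Q K" "PP Q" x] sub by simp
  also have "cnt (\<lambda>n. PP Q n \<and> \<not> AA Q K n) x \<le>
      cnt (\<lambda>n. (\<exists>j\<ge>2. j ^ K dvd n) \<or> (\<exists>j\<ge>Suc K. j ^ 2 dvd n)) x"
  proof (rule cnt_mono)
    fix n assume n: "1 \<le> n" "n \<le> x" "PP Q n \<and> \<not> AA Q K n"
    then obtain p where p: "prime p" "Q (multiplicity p n)" unfolding PP_def by blast
    have p2: "p \<ge> 2" using p(1) by (rule prime_ge_2_nat)
    show "(\<exists>j\<ge>2. j ^ K dvd n) \<or> (\<exists>j\<ge>Suc K. j ^ 2 dvd n)"
    proof (cases "p \<le> K")
      case True
      then have "multiplicity p n \<ge> K" using n p unfolding AA_def by (meson not_le)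
      then have "p ^ K dvd n" by (rule multiplicity_dvd')
      then show ?thesis using p2 by blast
    next
      case False
      have "multiplicity p n \<noteq> 0" using p(2) Q0 by metis
      moreover have "multiplicity p n \<noteq> 1" using p(2) Q1 by metis
      ultimately have "multiplicity p n \<ge> 2" by linarith
      then have "p ^ 2 dvd n" by (rule multiplicity_dvd')
      then show ?thesis using False by (meson not_le Suc_leI)
    qed
  qed
  also have "\<dots> \<le> cnt (\<lambda>n. \<exists>j\<ge>2. j ^ K dvd n) x + cnt (\<lambda>n. \<exists>j\<ge>Suc K. j ^ 2 dvd n) x"
    by (rule cnt_disj)
  finally have "real (cnt (PP Q) x) - real (cnt (AA Q K) x) \<le>
     real (cnt (\<lambda>n. \<exists>j\<ge>2. j ^ K dvd n) x) + real (cnt (\<lambda>n. \<exists>j\<ge>Suc K. j ^ 2 dvd n) x)"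
    by linarith
  also have "\<dots> \<le> (real x / 2 ^ K + real x / (2 * 3 ^ (K - 2)))
                 + (real x / real (Suc K) ^ 2 + real x / (real (Suc K) * real (Suc (Suc K)) ^ (2 - 2)))"
    using tail_bound[OF K, of 2 x] tail_bound[of 2 "Suc K" x] by (intro add_mono) auto
  also have "\<dots> \<le> (real x / real K + real x / real K) + (real x / real K + real x / real K)"
  proof -
    have Kp: "real K > 0" using K by simp
    have i1: "real K \<le> 2 ^ K" using less_exp[of K] by (metis less_imp_le of_nat_le_iff of_nat_numeral of_nat_power)
    have i2: "real K \<le> 2 * 3 ^ (K - 2)" using three_pow[OF K] by (metis of_nat_le_iff of_nat_mult of_nat_numeral of_nat_power)
    have "K \<le> Suc K ^ 2" by (simp add: power2_eq_square)
    then have i3: "real K \<le> real (Suc K) ^ 2" by (metis of_nat_le_iff of_nat_power)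
    have i4: "real K \<le> real (Suc K) * real (Suc (Suc K)) ^ (2 - 2)" by simp
    show ?thesis
      by (intro add_mono divide_left_mono i1 i2 i3 i4) (use Kp in auto)
  qed
  finally show ?thesis by simp
qed

lemma ratio_close:
  assumes Q0: "\<not> Q 0" and Q1: "\<not> Q 1" and K: "K \<ge> 2" and x: "x \<ge> 1"
  shows "\<bar>real (cnt (PP Q) x) / real x - real (cnt (AA Q K) (fact K ^ K)) / real (fact K ^ K)\<bar>
         \<le> 4 / real K + real (fact K ^ K) / real x"
proof -
  define M :: nat where "M = fact K ^ K"
  define c where "c = real (cnt (AA Q K) M) / real M"
  have M1: "M \<ge> 1" unfolding M_def by (simp add: fact_ge_1)
  have per: "\<And>n. n \<ge> 1 \<Longrightarrow> AA Q K (n + M) = AA Q K n" unfolding M_def by (rule AA_periodic)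
  have a: "\<bar>real (cnt (AA Q K) x) - real x * real (cnt (AA Q K) M) / real M\<bar> \<le> real M"
    by (rule period_approx[where A="AA Q K", OF M1 per])
  have b: "real (cnt (PP Q) x) - real (cnt (AA Q K) x) \<le> 4 * real x / real K"
    by (rule approx_bound[OF Q0 Q1 K])
  have b0: "cnt (AA Q K) x \<le> cnt (PP Q) x" by (rule cnt_mono) (auto simp: AA_def PP_def)
  have xc: "real x * c = real x * real (cnt (AA Q K) M) / real M" unfolding c_def by simp
  have "\<bar>real (cnt (PP Q) x) - real x * c\<bar> \<le> 4 * real x / real K + real M"
  proof -
    have b0': "real (cnt (AA Q K) x) \<le> real (cnt (PP Q) x)" using b0 by simp
    have a': "real (cnt (AA Q K) x) - real x * c \<le> real M" "real x * c - real (cnt (AA Q K) x) \<le> real M"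
      using a unfolding xc[symmetric] abs_le_iff by auto
    show ?thesis unfolding abs_le_iff using a' b b0' by linarith
  qed
  moreover have "\<bar>real (cnt (PP Q) x) / real x - c\<bar> = \<bar>real (cnt (PP Q) x) - real x * c\<bar> / real x"
  proof -
    have xp: "real x > 0" using x by simp
    have "real (cnt (PP Q) x) / real x - c = (real (cnt (PP Q) x) - real x * c) / real x"
      using xp by (simp add: diff_divide_distrib)
    then show ?thesis using xp by (simp add: abs_divide)
  qed
  ultimately have "\<bar>real (cnt (PP Q) x) / real x - c\<bar> \<le> (4 * real x / real K + real M) / real x"
    using x by (metis divide_right_mono of_nat_0_le_iff)
  also have "\<dots> = 4 / real K + real M / real x" using x by (simp add: add_divide_distrib)
  finally show ?thesis unfolding c_def M_def .
qed

lemma PP_convergent: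
  assumes Q0: "\<not> Q 0" and Q1: "\<not> Q 1"
  shows "convergent (\<lambda>x. real (cnt (PP Q) x) / real x)"
proof (rule Cauchy_convergent, rule metric_CauchyI)
  fix e :: real assume e: "e > 0"
  obtain K0 :: nat where K0: "16 / e < real K0" using reals_Archimedean2 by blast
  define K where "K = max K0 2"
  have K: "K \<ge> 2" unfolding K_def by simp
  have KK: "16 / e < real K" using K0 unfolding K_def by linarith
  define M :: nat where "M = fact K ^ K"
  define c where "c = real (cnt (AA Q K) M) / real M"
  obtain N0 :: nat where N0: "4 * real M / e < real N0" using reals_Archimedean2 by blast
  define N where "N = max N0 1"
  have N1: "N \<ge> 1" unfolding N_def by simp
  have NN: "4 * real M / e < real N" using N0 unfolding N_def by linarith
  have Kp: "real K > 0" using K by simp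
  have e1: "4 / real K < e / 4" using KK e Kp by (simp add: field_simps)
  have e2: "real M / real N < e / 4"
  proof -
    have "real N > 0" using N1 by simp
    then show ?thesis using NN e by (simp add: field_simps)
  qed
  have close: "\<bar>real (cnt (PP Q) x) / real x - c\<bar> < e / 2" if x: "x \<ge> N" for x
  proof -
    have x1: "x \<ge> 1" using x N1 by simp
    have "\<bar>real (cnt (PP Q) x) / real x - c\<bar> \<le> 4 / real K + real M / real x"
      unfolding c_def M_def by (rule ratio_close[OF Q0 Q1 K x1])
    also have "real M / real x \<le> real M / real N" using x N1 by (intro divide_left_mono) auto
    finally show ?thesis using e1 e2 by linarith
  qed
  show "\<exists>N. \<forall>m\<ge>N. \<forall>n\<ge>N. dist (real (cnt (PP Q) m) / real m) (real (cnt (PP Q) n) / real n) < e"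
  proof (intro exI allI impI)
    fix m n assume "m \<ge> N" "n \<ge> N"
    then have "\<bar>real (cnt (PP Q) m) / real m - c\<bar> < e / 2" "\<bar>real (cnt (PP Q) n) / real n - c\<bar> < e / 2"
      using close by auto
    then show "dist (real (cnt (PP Q) m) / real m) (real (cnt (PP Q) n) / real n) < e"
      unfolding dist_real_def by linarith
  qed
qed

lemma tet_ge2: "k \<ge> 1 \<Longrightarrow> tet 2 k \<ge> 2"
proof -
  assume "k \<ge> 1"
  then obtain j where "k = Suc j" by (cases k) auto
  moreover have "(2::nat) ^ 1 \<le> 2 ^ (tet 2 j)" by (rule power_increasing) (use tet_ge1[of j] in auto)
  ultimately show ?thesis by simp
qed

lemma pow23: "t \<ge> 2 \<Longrightarrow> 2 * 2 ^ t \<le> (3::nat) ^ t"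
proof (induction t rule: dec_induct)
  case base then show ?case by simp
next
  case (step n) then show ?case by simp
qed

lemma struct_E:
  assumes k: "k \<ge> 2" and Ha: "k \<le> H a" and ne: "a \<noteq> tet 2 k"
  shows "2 * tet 2 k \<le> a"
proof -
  obtain k' where kk: "k = Suc k'" using k by (cases k) auto
  have k': "k' \<ge> 1" using k kk by simp
  have a1: "a \<ge> 1" using H_pos[of a] Ha k by simp
  obtain p where p: "prime p" "k' \<le> H (multiplicity p a)"
    using H_ge_Suc_iff[OF a1 k'] Ha kk by auto
  define b where "b = multiplicity p a"
  define t where "t = tet 2 k'"
  have tk: "tet 2 k = 2 ^ t" unfolding t_def kk by simp
  have b1: "b \<ge> 1" using H_pos[of b] p k' unfolding b_def by simp
  have tb: "t \<le> b" unfolding t_def b_def using tet_min[OF b1[unfolded b_def] p(2)] .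
  have t2: "t \<ge> 2" unfolding t_def using tet_ge2[OF k'] .
  have pba: "p ^ b dvd a" unfolding b_def by (rule multiplicity_dvd)
  have pba': "p ^ b \<le> a" using pba a1 by (intro dvd_imp_le) auto
  show ?thesis
  proof (cases "p = 2")
    case True
    show ?thesis
    proof (cases "b = t")
      case bt: True
      then obtain c where c: "a = 2 ^ t * c" using pba True by (auto elim!: dvdE)
      have "c \<noteq> 0" using c a1 by auto
      moreover have "c \<noteq> 1" using c ne tk by auto
      ultimately have "c \<ge> 2" by simp
      then have "2 ^ t * 2 \<le> 2 ^ t * c" by (intro mult_left_mono) auto
      then show ?thesis using c tk by simp
    next
      case False
      then have "Suc t \<le> b" using tb by simp
      then have "(2::nat) ^ Suc t \<le> 2 ^ b" by (intro power_increasing) auto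
      then show ?thesis using pba' True tk by simp
    qed
  next
    case False
    have p3: "p \<ge> 3" using prime_ge_2_nat[OF p(1)] False by simp
    have "2 * 2 ^ t \<le> (3::nat) ^ t" using pow23[OF t2] .
    also have "\<dots> \<le> 3 ^ b" using tb by (intro power_increasing) auto
    also have "\<dots> \<le> p ^ b" using p3 by (intro power_mono) auto
    also have "\<dots> \<le> a" using pba' .
    finally show ?thesis using tk by simp
  qed
qed

lemma tet_ge16: "k \<ge> 3 \<Longrightarrow> tet 2 k \<ge> 16"
proof (induction k rule: dec_induct)
  case base then show ?case by (simp add: numeral_eq_Suc)
next
  case (step n)
  have "tet 2 n < 2 ^ tet 2 n" by (rule less_exp)
  then have "16 \<le> (2::nat) ^ tet 2 n" using step.IH by linarith
  then show ?case by simp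
qed

lemma N1: "T \<ge> 5 \<Longrightarrow> 19 * 3 ^ T \<le> 6 * (4::nat) ^ T"
proof (induction T rule: dec_induct)
  case base then show ?case by simp
next
  case (step n) then show ?case by simp
qed

lemma N0: "T \<ge> 4 \<Longrightarrow> 2 * T + 4 \<le> (2::nat) ^ T"
proof (induction T rule: dec_induct)
  case base then show ?case by simp
next
  case (step n) then show ?case by simp
qed

lemma N2: "T \<ge> 4 \<Longrightarrow> 11 * 3 ^ T \<le> 6 * (2::nat) ^ (2 ^ T)"
proof -
  assume T: "T \<ge> 4"
  have "11 * 3 ^ T \<le> 16 * (4::nat) ^ T" by (intro mult_mono power_mono) auto
  also have "\<dots> = 2 ^ (2 * T + 4)" by (simp add: power_add power_mult)
  also have "\<dots> \<le> 2 ^ (2 ^ T)" using N0[OF T] by (intro power_increasing) auto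
  also have "\<dots> \<le> 6 * 2 ^ (2 ^ T)" by simp
  finally show ?thesis .
qed

lemma lim_upper:
  fixes X :: "nat \<Rightarrow> real"
  assumes X: "X \<longlonglongrightarrow> L" and b: "\<And>x. x \<ge> 1 \<Longrightarrow> X x \<le> h + e / real x"
  shows "L \<le> h"
proof -
  have "(\<lambda>x. h + e / real x) \<longlonglongrightarrow> h + 0" by (intro tendsto_intros)
  then show ?thesis using LIMSEQ_le[OF X, of "\<lambda>x. h + e / real x" "h + 0"] b by auto
qed

lemma lim_lower:
  fixes X :: "nat \<Rightarrow> real"
  assumes X: "X \<longlonglongrightarrow> L" and b: "\<And>x. x \<ge> 1 \<Longrightarrow> h - e / real x \<le> X x"
  shows "h \<le> L"
proof -
  have "(\<lambda>x. h - e / real x) \<longlonglongrightarrow> h - 0" by (intro tendsto_intros)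
  then show ?thesis using LIMSEQ_le[OF _ X, of "\<lambda>x. h - e / real x" "h - 0"] b by auto
qed

lemma ratio_up: "x \<ge> 1 \<Longrightarrow> C \<le> real x * h + e \<Longrightarrow> C / real x \<le> h + e / real x"
proof -
  assume x: "x \<ge> 1" and C: "C \<le> real x * h + e"
  have xp: "real x > 0" using x by simp
  have "C / real x \<le> (real x * h + e) / real x" using C xp by (simp add: divide_right_mono)
  also have "\<dots> = h + e / real x" using xp by (simp add: add_divide_distrib)
  finally show ?thesis .
qed

lemma ratio_low: "x \<ge> 1 \<Longrightarrow> real x * h - e \<le> C \<Longrightarrow> h - e / real x \<le> C / real x"
proof -
  assume x: "x \<ge> 1" and C: "real x * h - e \<le> C"
  have xp: "real x > 0" using x by simp
  have "h - e / real x = (real x * h - e) / real x" using xp by (simp add: diff_divide_distrib)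
  also have "\<dots> \<le> C / real x" using C xp by (simp add: divide_right_mono)
  finally show ?thesis .
qed

lemma v2_count:
  fixes T x :: nat
  defines "v \<equiv> real (cnt (\<lambda>n. 2 ^ T dvd n \<and> \<not> 2 ^ Suc T dvd n) x)"
  shows "v \<le> real x * (1 / 2 ^ Suc T) + 1 / 2" and "real x * (1 / 2 ^ Suc T) - 1 / 2 \<le> v"
proof -
  have d1: "(2::nat) ^ T \<ge> 1" by simp
  have d2: "(2::nat) ^ Suc T \<ge> 1" by simp
  have "v = real (cnt (\<lambda>n. 2 ^ T dvd n) x) - real (cnt (\<lambda>n. 2 ^ Suc T dvd n) x)"
    unfolding v_def by (rule cnt_diff) (metis dvd_trans le_imp_power_dvd le_Suc_eq order_refl)
  also have "\<dots> = real (x div 2 ^ T) - real (x div 2 ^ Suc T)"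
    using cnt_dvd[OF d1] cnt_dvd[OF d2] by simp
  finally have v0: "v = real (x div 2 ^ T) - real (x div 2 ^ Suc T)" .
  have "x div 2 ^ Suc T = x div 2 ^ T div 2"
    by (metis div_mult2_eq power_Suc2)
  then have v: "v = real (x div 2 ^ T) - real (x div 2 ^ T div 2)" using v0 by simp
  define y where "y = x div 2 ^ T"
  have y1: "real y \<le> real x / 2 ^ T" unfolding y_def using real_div_le[OF d1, of x] by simp
  have y2: "real x / 2 ^ T - 1 \<le> real y" unfolding y_def using real_div_ge[OF d1, of x] by simp
  have z1: "real (y div 2) \<le> real y / 2" using real_div_le[of 2 y] by simp
  have z2: "real y / 2 - 1 / 2 \<le> real (y div 2)"
  proof -
    have "real y / 2 = real (y div 2) + real (y mod 2) / 2" using of_nat_of_nat_div_aux[of y 2] by simp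
    moreover have "real (y mod 2) \<le> 1" by simp
    ultimately show ?thesis by linarith
  qed
  define w where "w = real x / 2 ^ T"
  have e: "real x * (1 / 2 ^ Suc T) = w / 2" unfolding w_def by simp
  show "v \<le> real x * (1 / 2 ^ Suc T) + 1 / 2" using v y1 z2 unfolding e y_def[symmetric] w_def[symmetric] by linarith
  show "real x * (1 / 2 ^ Suc T) - 1 / 2 \<le> v" using v y2 z1 unfolding e y_def[symmetric] w_def[symmetric] by linarith
qed

theorem lemma6:
  fixes m :: nat
  assumes "m \<ge> 4"
  shows "\<bar>D m - (1/2) * (1 / real (tet 2 m))\<bar> \<le> 3 / 3 ^ (tet 2 (m - 1))"
proof -
  define k where "k = m - 1"
  have k3: "k \<ge> 3" and mk: "m = Suc k" using assms unfolding k_def by auto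
  define T where "T = tet 2 k"
  define U where "U = tet 2 m"
  have UT: "U = 2 ^ T" unfolding U_def T_def mk by simp
  have T16: "T \<ge> 16" unfolding T_def by (rule tet_ge16[OF k3])
  have "(2::nat) ^ 1 \<le> 2 ^ T" using T16 by (intro power_increasing) auto
  then have U2: "U \<ge> 2" unfolding UT by simp
  define Q1 where "Q1 = (\<lambda>a. k \<le> H a)"
  define Q2 where "Q2 = (\<lambda>a. Suc k \<le> H a)"
  have Q1a: "\<not> Q1 0" "\<not> Q1 1" unfolding Q1_def using k3 by auto
  have Q2a: "\<not> Q2 0" "\<not> Q2 1" unfolding Q2_def by auto
  define f1 where "f1 = (\<lambda>x. real (cnt (PP Q1) x) / real x)"
  define f2 where "f2 = (\<lambda>x. real (cnt (PP Q2) x) / real x)"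
  define L1 where "L1 = lim f1"
  define L2 where "L2 = lim f2"
  have t1: "f1 \<longlonglongrightarrow> L1" unfolding L1_def f1_def
    using PP_convergent[OF Q1a] by (simp add: convergent_LIMSEQ_iff)
  have t2: "f2 \<longlonglongrightarrow> L2" unfolding L2_def f2_def
    using PP_convergent[OF Q2a] by (simp add: convergent_LIMSEQ_iff)
  have k1: "k \<ge> 1" using k3 by simp
  have eqH: "(H n = m) \<longleftrightarrow> PP Q1 n \<and> \<not> PP Q2 n" if n: "n \<ge> 1" for n
  proof -
    have a: "(Suc k \<le> H n) \<longleftrightarrow> PP Q1 n" unfolding PP_def Q1_def using H_ge_Suc_iff[OF n k1] .
    have b: "(Suc (Suc k) \<le> H n) \<longleftrightarrow> PP Q2 n" unfolding PP_def Q2_def using H_ge_Suc_iff[OF n, of "Suc k"] by simp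
    show ?thesis using a b mk by auto
  qed
  have sub: "PP Q2 n \<Longrightarrow> PP Q1 n" for n unfolding PP_def Q1_def Q2_def by (meson Suc_leD)
  have ratio: "real (card {n \<in> {1..x}. n \<in> {n. n \<ge> 1 \<and> H n = m}}) / real x = f1 x - f2 x" for x
  proof -
    have "{n \<in> {1..x}. n \<in> {n. n \<ge> 1 \<and> H n = m}} = {n \<in> {1..x}. PP Q1 n \<and> \<not> PP Q2 n}"
      using eqH by auto
    then have "card {n \<in> {1..x}. n \<in> {n. n \<ge> 1 \<and> H n = m}} = cnt (\<lambda>n. PP Q1 n \<and> \<not> PP Q2 n) x"
      unfolding cnt_def by simp
    then have "real (card {n \<in> {1..x}. n \<in> {n. n \<ge> 1 \<and> H n = m}}) = real (cnt (PP Q1) x) - real (cnt (PP Q2) x)"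
      using cnt_diff[of "PP Q2" "PP Q1" x] sub by simp
    then show ?thesis unfolding f1_def f2_def by (simp add: diff_divide_distrib)
  qed
  have Dm: "D m = L1 - L2"
  proof -
    have "D m = lim (\<lambda>x. f1 x - f2 x)" unfolding D_def natural_density_def ratio ..
    also have "\<dots> = L1 - L2" by (rule limI) (intro tendsto_diff t1 t2)
    finally show ?thesis .
  qed
  define a0 :: real where "a0 = 1 / 2 ^ Suc T"
  define hi1 :: real where "hi1 = a0 + 1 / 2 ^ (2 * T) + 1 / 3 ^ T + 1 / (3 * 4 ^ (T - 2))"
  define hi2 :: real where "hi2 = 1 / 2 ^ U + 1 / (2 * 3 ^ (U - 2))"
  define v2 where "v2 = (\<lambda>n::nat. 2 ^ T dvd n \<and> \<not> 2 ^ Suc T dvd n)"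
  have k2: "k \<ge> 2" using k3 by simp
  have up1: "real (cnt (PP Q1) x) \<le> real x * hi1 + 1 / 2" for x
  proof -
    have "cnt (PP Q1) x \<le> cnt (\<lambda>n. v2 n \<or> (2 ^ (2 * T) dvd n \<or> (\<exists>j\<ge>3. j ^ T dvd n))) x"
    proof (rule cnt_mono)
      fix n assume n: "1 \<le> n" "n \<le> x" "PP Q1 n"
      then obtain p where p: "prime p" "k \<le> H (multiplicity p n)" unfolding PP_def Q1_def by blast
      define a where "a = multiplicity p n"
      have a1: "a \<ge> 1" using H_pos[of a] p(2) k1 unfolding a_def by simp
      have Ta: "T \<le> a" unfolding T_def using tet_min[OF a1] p(2) unfolding a_def by simp
      have n0: "n \<noteq> 0" using n by simp
      show "v2 n \<or> (2 ^ (2 * T) dvd n \<or> (\<exists>j\<ge>3. j ^ T dvd n))"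
      proof (cases "p = 2")
        case True
        show ?thesis
        proof (cases "a = T")
          case aT: True
          have "2 ^ T dvd n" using multiplicity_dvd[of p n] True aT unfolding a_def by simp
          moreover have "\<not> 2 ^ Suc T dvd n"
            using power_dvd_iff_le_multiplicity[OF n0, of 2 "Suc T"] True aT unfolding a_def by simp
          ultimately show ?thesis unfolding v2_def by simp
        next
          case False
          have "2 * tet 2 k \<le> a" using struct_E[OF k2 p(2)[folded a_def]] False unfolding T_def by simp
          then have "2 * T \<le> multiplicity p n" unfolding a_def T_def .
          then have "p ^ (2 * T) dvd n" by (rule multiplicity_dvd')
          then show ?thesis using True by simp
        qed
      next
        case False
        have "p \<ge> 3" using prime_ge_2_nat[OF p(1)] False by simp
        moreover have "p ^ T dvd n" using Ta unfolding a_def by (rule multiplicity_dvd')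
        ultimately show ?thesis by blast
      qed
    qed
    also have "\<dots> \<le> cnt v2 x + cnt (\<lambda>n. 2 ^ (2 * T) dvd n \<or> (\<exists>j\<ge>3. j ^ T dvd n)) x"
      by (rule cnt_disj)
    also have "\<dots> \<le> cnt v2 x + (cnt (\<lambda>n. 2 ^ (2 * T) dvd n) x + cnt (\<lambda>n. \<exists>j\<ge>3. j ^ T dvd n) x)"
      using cnt_disj by (meson add_left_mono)
    finally have c: "real (cnt (PP Q1) x) \<le> real (cnt v2 x) + (real (cnt (\<lambda>n. 2 ^ (2 * T) dvd n) x)
        + real (cnt (\<lambda>n. \<exists>j\<ge>3. j ^ T dvd n) x))" by linarith
    have b1: "real (cnt v2 x) \<le> real x * a0 + 1 / 2" unfolding v2_def a0_def by (rule v2_count(1))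
    have b2: "real (cnt (\<lambda>n. 2 ^ (2 * T) dvd n) x) \<le> real x * (1 / 2 ^ (2 * T))"
      using cnt_dvd_le[of "2 ^ (2 * T)" x] by simp
    have T2: "T \<ge> 2" using T16 by simp
    have b3: "real (cnt (\<lambda>n. \<exists>j\<ge>3. j ^ T dvd n) x) \<le> real x * (1 / 3 ^ T) + real x * (1 / (3 * 4 ^ (T - 2)))"
      using tail_bound[OF T2, of 3 x] by simp
    have "real x * hi1 = real x * a0 + real x * (1 / 2 ^ (2 * T)) + real x * (1 / 3 ^ T) + real x * (1 / (3 * 4 ^ (T - 2)))"
      unfolding hi1_def by (simp add: distrib_left)
    then show ?thesis using c b1 b2 b3 by linarith
  qed
  have low1: "real x * a0 - 1 / 2 \<le> real (cnt (PP Q1) x)" for x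
  proof -
    have "cnt v2 x \<le> cnt (PP Q1) x"
    proof (rule cnt_mono)
      fix n assume n: "1 \<le> n" "n \<le> x" "v2 n"
      have "multiplicity 2 n = T" using n(3) unfolding v2_def by (intro multiplicity_eqI) auto
      then have "Q1 (multiplicity 2 n)" unfolding Q1_def T_def by (simp add: H_tet)
      then show "PP Q1 n" unfolding PP_def using two_is_prime_nat by blast
    qed
    moreover have "real x * a0 - 1 / 2 \<le> real (cnt v2 x)" unfolding v2_def a0_def by (rule v2_count(2))
    ultimately show ?thesis by linarith
  qed
  have up2: "real (cnt (PP Q2) x) \<le> real x * hi2 + 0" for x
  proof -
    have "cnt (PP Q2) x \<le> cnt (\<lambda>n. \<exists>j\<ge>2. j ^ U dvd n) x"
    proof (rule cnt_mono)
      fix n assume n: "1 \<le> n" "n \<le> x" "PP Q2 n"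
      then obtain p where p: "prime p" "Suc k \<le> H (multiplicity p n)" unfolding PP_def Q2_def by blast
      have a1: "multiplicity p n \<ge> 1" using H_pos[of "multiplicity p n"] p(2) by simp
      have "U \<le> multiplicity p n" unfolding U_def mk using tet_min[OF a1 p(2)] .
      then have "p ^ U dvd n" by (rule multiplicity_dvd')
      then show "\<exists>j\<ge>2. j ^ U dvd n" using prime_ge_2_nat[OF p(1)] by blast
    qed
    then have "real (cnt (PP Q2) x) \<le> real (cnt (\<lambda>n. \<exists>j\<ge>2. j ^ U dvd n) x)" by simp
    also have "\<dots> \<le> real x * (1 / 2 ^ U) + real x * (1 / (2 * 3 ^ (U - 2)))"
      using tail_bound[OF U2, of 2 x] by simp
    also have "\<dots> = real x * hi2 + 0" unfolding hi2_def by (simp add: distrib_left)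
    finally show ?thesis .
  qed
  have L1u: "L1 \<le> hi1"
    by (rule lim_upper[OF t1, of hi1 "1/2"]) (unfold f1_def, rule ratio_up, auto intro: up1)
  have L1l: "a0 \<le> L1"
    by (rule lim_lower[OF t1, of a0 "1/2"]) (unfold f1_def, rule ratio_low, auto intro: low1)
  have L2u: "L2 \<le> hi2"
    by (rule lim_upper[OF t2, of hi2 0]) (unfold f2_def, rule ratio_up, auto intro: up2[simplified])
  have L2l: "0 \<le> L2"
    by (rule lim_lower[OF t2, of 0 0]) (unfold f2_def, auto)
  have main: "(1/2) * (1 / real (tet 2 m)) = a0"
    unfolding a0_def U_def[symmetric] UT by simp
  have r1: "hi1 - a0 \<le> 3 / 3 ^ T"
  proof -
    define A :: real where "A = 3 ^ T"
    define B :: real where "B = 4 ^ T"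
    have Ap: "A > 0" and Bp: "B > 0" unfolding A_def B_def by simp_all
    have e1: "(2::real) ^ (2 * T) = B" unfolding B_def by (simp add: power_mult)
    have "T = (T - 2) + 2" using T16 by simp
    then have "(4::real) ^ T = 4 ^ (T - 2) * 4 ^ 2" by (metis power_add)
    then have e2: "3 * (4::real) ^ (T - 2) = 3 * B / 16" unfolding B_def by simp
    have "19 * 3 ^ T \<le> 6 * (4::nat) ^ T" using T16 by (intro N1) simp
    then have "real (19 * 3 ^ T) \<le> real (6 * (4::nat) ^ T)" by (simp only: of_nat_le_iff)
    then have n1: "19 * A \<le> 6 * B" unfolding A_def B_def by simp
    have "hi1 - a0 = 1 / B + 1 / A + 16 / (3 * B)" unfolding hi1_def e1 e2 A_def[symmetric] by simp
    also have "\<dots> = 1 / A + (19 / 3) / B" by (simp add: field_simps)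
    also have "(19 / 3) / B \<le> 2 / A" using Ap Bp n1 by (simp add: field_simps)
    finally show ?thesis unfolding A_def by simp
  qed
  have r2: "hi2 \<le> 3 / 3 ^ T"
  proof -
    define A :: real where "A = 3 ^ T"
    define C :: real where "C = 2 ^ U"
    define E :: real where "E = 3 ^ U"
    have Ap: "A > 0" and Cp: "C > 0" and Ep: "E > 0" unfolding A_def C_def E_def by simp_all
    have CE: "C \<le> E" unfolding C_def E_def by (intro power_mono) auto
    have "U = (U - 2) + 2" using U2 by simp
    then have "(3::real) ^ U = 3 ^ (U - 2) * 3 ^ 2" by (metis power_add)
    then have e2: "2 * (3::real) ^ (U - 2) = 2 * E / 9" unfolding E_def by simp
    have "11 * 3 ^ T \<le> 6 * (2::nat) ^ (2 ^ T)" using T16 by (intro N2) simp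
    then have "real (11 * 3 ^ T) \<le> real (6 * (2::nat) ^ (2 ^ T))" by (simp only: of_nat_le_iff)
    then have n2: "11 * A \<le> 6 * C" unfolding A_def C_def UT by simp
    have "hi2 = 1 / C + 9 / (2 * E)" unfolding hi2_def e2 C_def[symmetric] by simp
    also have "9 / (2 * E) \<le> 9 / (2 * C)" using CE Cp by (intro divide_left_mono) auto
    also have "1 / C + 9 / (2 * C) = (11 / 2) / C" by (simp add: field_simps)
    also have "\<dots> \<le> 3 / A" using Ap Cp n2 by (simp add: field_simps)
    finally show ?thesis unfolding A_def by simp
  qed
  show ?thesis unfolding Dm main k_def[symmetric] T_def[symmetric]
    using L1u L1l L2u L2l r1 r2 by (simp add: abs_le_iff)
qed

end
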